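(* Let $k\ge2$ and let $\mathcal{H}\subset\mathbb{CP}^3$ be an essential arrangement of $2k$ planes such that every plane in $\mathcal{H}$ meets the other planes of $\mathcal{H}$ along exactly $k+1$ distinct lines. Then $\mathcal{H}$ is a Hirzebruch arrangement.
   Context: An arrangement is a finite set of distinct hyperplanes; it is essential if the common intersection of its members is empty. $\mathcal{L}$ is the set of non-empty proper intersections of members and $m_L$ the number of members containing $L$. An essential arrangement $\mathcal{H}\subset\mathbb{CP}^n$ is Hirzebruch if (H1) $m_L/\operatorname{codim}L\le|\mathcal{H}|/(n+1)$ for all $L\in\mathcal{L}$, and (H2) every $H\in\mathcal{H}$ meets the members of $\mathcal{H}\setminus\{H\}$ along exactly $\big(1-\frac{2}{n+1}\big)|\mathcal{H}|+1$ distinct codimension-2 subspaces. *)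

theory Defs
  imports "HOL-Analysis.Analysis"
begin

text \<open>Projective space P(K^N) with K = complex and N = CARD('n), i.e. CP^n with n = CARD('n) - 1.
  A projective subspace is represented by the corresponding linear subspace of complex^'n;
  the empty projective subspace corresponds to the zero subspace {0}.
  Codimension in P(K^N) equals codimension of the linear subspace in K^N.\<close>

definition proj_hyperplane :: "(complex^'n) set \<Rightarrow> bool" where
  "proj_hyperplane H \<longleftrightarrow> (\<exists>a::complex^'n. a \<noteq> 0 \<and> H = {x. (\<Sum>i\<in>UNIV. a$i * x$i) = 0})"

definition arrangement :: "(complex^'n) set set \<Rightarrow> bool" where
  "arrangement A \<longleftrightarrow> finite A \<and> (\<forall>H\<in>A. proj_hyperplane H)"

definition essential :: "(complex^'n) set set \<Rightarrow> bool" where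
  "essential A \<longleftrightarrow> \<Inter>A = {0}"

definition lcodim :: "(complex^'n) set \<Rightarrow> nat" where
  "lcodim L = CARD('n) - vec.dim L"

definition flats :: "(complex^'n) set set \<Rightarrow> (complex^'n) set set" where
  "flats A = {L. \<exists>S. S \<subseteq> A \<and> S \<noteq> {} \<and> L = \<Inter>S \<and> L \<noteq> {0} \<and> L \<noteq> UNIV}"

definition mult :: "(complex^'n) set set \<Rightarrow> (complex^'n) set \<Rightarrow> nat" where
  "mult A L = card {H\<in>A. L \<subseteq> H}"

definition trace_lines :: "(complex^'n) set set \<Rightarrow> (complex^'n) set \<Rightarrow> (complex^'n) set set" where
  "trace_lines A H = {L. \<exists>H'\<in>A - {H}. L = H \<inter> H' \<and> lcodim L = 2}"

definition hirzebruch :: "(complex^'n) set set \<Rightarrow> bool" where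
  "hirzebruch A \<longleftrightarrow> arrangement A \<and> essential A \<and>
     (\<forall>L\<in>flats A. real (mult A L) / real (lcodim L) \<le> real (card A) / real CARD('n)) \<and>
     (\<forall>H\<in>A. real (card (trace_lines A H)) = (1 - 2 / real CARD('n)) * real (card A) + 1)"

end

theory Submission
  imports Defs
begin

type_synonym V4 = "complex^4"

lemma hyp_sub:
  assumes "proj_hyperplane (H::V4 set)"
  shows "vec.subspace H"
proof -
  obtain a :: V4 where a: "a \<noteq> 0" "H = {x. (\<Sum>i\<in>UNIV. a$i * x$i) = 0}"
    using assms unfolding proj_hyperplane_def by blast
  show ?thesis unfolding a(2) vec.subspace_def
    by (auto simp: sum.distrib distrib_left sum_distrib_left[symmetric] mult.left_commute)
qed

lemma sum_axis: "(\<Sum>j\<in>UNIV. (a::V4)$j * (axis i c :: V4) $ j) = a$i * c"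
  by (simp add: axis_def if_distrib cong: if_cong)

lemma hyp_dim:
  assumes "proj_hyperplane (H::V4 set)"
  shows "vec.dim H = 3"
proof -
  obtain a :: V4 where a: "a \<noteq> 0" "H = {x. (\<Sum>i\<in>UNIV. a$i * x$i) = 0}"
    using assms unfolding proj_hyperplane_def by blast
  define f where "f x = (\<Sum>i\<in>UNIV. a$i * (x::V4)$i)" for x
  obtain i where i: "a$i \<noteq> 0" using a(1) by (metis vec_eq_iff zero_index)
  define v :: V4 where "v = axis i (1 / a$i)"
  have fv: "f v = 1" using i by (simp add: f_def v_def sum_axis)
  have v0: "v \<noteq> 0" using fv by (auto simp: f_def)
  have fl: "f (x - c *s y) = f x - c * f y" for x y c
    by (simp add: f_def sum_subtractf sum_distrib_left algebra_simps)
  have fs: "f (c *s y) = c * f y" for y c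
    by (simp add: f_def sum_distrib_left algebra_simps)
  have Hf: "H = {x. f x = 0}" using a(2) f_def by auto
  have sH: "vec.subspace H" using hyp_sub assms by blast
  define V where "V = vec.span {v}"
  have sV: "vec.subspace V" unfolding V_def by simp
  have sums: "{x + y |x y. x \<in> H \<and> y \<in> V} = UNIV"
  proof -
    have "x \<in> {x + y |x y. x \<in> H \<and> y \<in> V}" for x
    proof -
      have "x - f x *s v \<in> H" using fl[of x "f x" v] fv by (simp add: Hf)
      moreover have "f x *s v \<in> V" unfolding V_def vec.span_singleton by blast
      ultimately show ?thesis by (metis (mono_tags, lifting) diff_add_cancel mem_Collect_eq)
    qed
    then show ?thesis by blast
  qed
  have int: "H \<inter> V = {0}"
  proof -
    have "x = 0" if xH: "x \<in> H" and xV: "x \<in> V" for x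
    proof -
      obtain c where "x = c *s v" using xV unfolding V_def vec.span_singleton by blast
      then show ?thesis using xH fs[of c v] fv by (simp add: Hf)
    qed
    moreover have "0 \<in> H \<inter> V" using sH sV by (simp add: vec.subspace_0)
    ultimately show ?thesis by blast
  qed
  have dV: "vec.dim V = 1" unfolding V_def using v0 by (simp add: vec.dim_span)
  have "vec.dim {x + y |x y. x \<in> H \<and> y \<in> V} + vec.dim (H \<inter> V) = vec.dim H + vec.dim V"
    by (rule vec.dim_sums_Int[OF sH sV])
  then show ?thesis using sums int dV vec_dim_card[where 'a=complex and 'n=4] by simp
qed

lemma hyp_int_dim:
  assumes "proj_hyperplane (H::V4 set)" "proj_hyperplane H'" "H \<noteq> H'"
  shows "vec.dim (H \<inter> H') = 2"
proof -
  have s: "vec.subspace H" "vec.subspace H'" using assms hyp_sub by auto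
  have d: "vec.dim H = 3" "vec.dim H' = 3" using assms hyp_dim by auto
  define S where "S = {x + y |x y. x \<in> H \<and> y \<in> H'}"
  have sS: "vec.subspace S" unfolding S_def using vec.subspace_sums s by blast
  have HS: "H \<subseteq> S" unfolding S_def using s(2) vec.subspace_0
    by (metis (mono_tags, lifting) add.right_neutral mem_Collect_eq subsetI)
  have HS': "H' \<subseteq> S" unfolding S_def using s(1) vec.subspace_0
    by (metis (mono_tags, lifting) add.left_neutral mem_Collect_eq subsetI)
  have le: "vec.dim S \<le> 4" using vec.dim_subset[of S UNIV] vec_dim_card[where 'a=complex and 'n=4] by simp
  have "vec.dim S \<noteq> 3"
  proof
    assume "vec.dim S = 3"
    then have "H = S" "H' = S" using vec.subspace_dim_equal[OF s(1) sS HS] vec.subspace_dim_equal[OF s(2) sS HS'] d by auto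
    then show False using assms(3) by simp
  qed
  moreover have "vec.dim S \<ge> 3" using vec.dim_subset[OF HS] d by simp
  ultimately have "vec.dim S = 4" using le by simp
  moreover have "vec.dim S + vec.dim (H \<inter> H') = vec.dim H + vec.dim H'"
    unfolding S_def by (rule vec.dim_sums_Int[OF s])
  ultimately show ?thesis using d by simp
qed


lemma flat_bound:
  fixes A :: "V4 set set" and k :: nat
  assumes k: "k \<ge> 2"
    and arr: "arrangement A"
    and ess: "essential A"
    and cA: "card A = 2 * k"
    and tr: "\<forall>H\<in>A. card (trace_lines A H) = k + 1"
    and L: "L \<in> flats A"
  shows "4 * mult A L \<le> 2 * k * lcodim L \<and> lcodim L > 0"
proof -
  obtain S where S: "S \<subseteq> A" "S \<noteq> {}" "L = \<Inter>S" "L \<noteq> {0}" "L \<noteq> UNIV"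
    using L unfolding flats_def by blast
  have fin: "finite A" and hyp: "\<And>H. H \<in> A \<Longrightarrow> proj_hyperplane H"
    using arr unfolding arrangement_def by auto
  have sub: "\<And>H. H \<in> A \<Longrightarrow> vec.subspace H" using hyp hyp_sub by blast
  have dimH: "\<And>H. H \<in> A \<Longrightarrow> vec.dim H = 3" using hyp hyp_dim by blast
  have sL: "vec.subspace L" using S sub vec.subspace_Inter by blast
  have dU: "vec.dim (UNIV::V4 set) = 4" using vec_dim_card[where 'a=complex and 'n=4] by simp
  have d1: "vec.dim L \<ge> 1"
  proof (rule ccontr)
    assume "\<not> vec.dim L \<ge> 1"
    then have "L \<subseteq> {0}" using vec.dim_eq_0[of L] by (metis less_one not_le)
    then show False using S(4) sL vec.subspace_0 by blast
  qed
  have d4: "vec.dim L \<le> 3"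
  proof (rule ccontr)
    assume "\<not> vec.dim L \<le> 3"
    then have "vec.dim L \<ge> vec.dim (UNIV::V4 set)" using dU by simp
    then have "L = UNIV" using vec.subspace_dim_equal[OF sL vec.subspace_UNIV] by blast
    then show False using S(5) by simp
  qed
  have lc: "lcodim L = 4 - vec.dim L" unfolding lcodim_def by simp
  define P where "P = {H\<in>A. L \<subseteq> H}"
  have m: "mult A L = card P" unfolding mult_def P_def by simp
  have finP: "finite P" using fin P_def by simp
  have SP: "S \<subseteq> P" using S unfolding P_def by blast
  obtain H where HS: "H \<in> S" using S(2) by blast
  have HP: "H \<in> P" using HS SP by blast
  have HA: "H \<in> A" and LH: "L \<subseteq> H" using HP P_def by auto
  consider "vec.dim L = 3" | "vec.dim L = 2" | "vec.dim L = 1" using d1 d4 by linarith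
  then have "4 * card P \<le> 2 * k * lcodim L"
  proof cases
    case 1
    have "P = {H}"
    proof
      show "{H} \<subseteq> P" using HP by simp
      show "P \<subseteq> {H}"
      proof
        fix H' assume "H' \<in> P"
        then have "H' \<in> A" "L \<subseteq> H'" using P_def by auto
        then have "L = H'" "L = H" using vec.subspace_dim_equal[OF sL sub] dimH 1 HA LH by auto
        then show "H' \<in> {H}" by simp
      qed
    qed
    then show ?thesis using 1 lc k by simp
  next
    case 2
    have "trace_lines A H \<subseteq> insert L ((\<lambda>H'. H \<inter> H') ` (A - P))"
    proof
      fix X assume "X \<in> trace_lines A H"
      then obtain H' where H': "H' \<in> A - {H}" "X = H \<inter> H'" "lcodim X = 2"
        unfolding trace_lines_def by blast
      show "X \<in> insert L ((\<lambda>H'. H \<inter> H') ` (A - P))"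
      proof (cases "H' \<in> P")
        case True
        have dX: "vec.dim X = 2" using hyp_int_dim[of H H'] hyp HA H' by auto
        have "L \<subseteq> X" using True LH H' P_def by auto
        moreover have "vec.subspace X" using H' sub HA vec.subspace_inter by auto
        ultimately have "L = X" using vec.subspace_dim_equal[OF sL] dX 2 by auto
        then show ?thesis by simp
      next
        case False
        then show ?thesis using H' by auto
      qed
    qed
    then have "card (trace_lines A H) \<le> card (insert L ((\<lambda>H'. H \<inter> H') ` (A - P)))"
      by (intro card_mono) (use fin in auto)
    also have "\<dots> \<le> Suc (card ((\<lambda>H'. H \<inter> H') ` (A - P)))" by (rule card_insert_le_m1) simp_all
    also have "\<dots> \<le> Suc (card (A - P))" using card_image_le[of "A - P" "\<lambda>H'. H \<inter> H'"] fin by simp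
    also have "card (A - P) = card A - card P" using card_Diff_subset[OF finP] P_def by auto
    finally have "k + 1 \<le> Suc (2 * k - card P)" using tr HA cA by simp
    moreover have "card P \<le> 2 * k" using card_mono[OF fin, of P] P_def cA by auto
    ultimately have "card P \<le> k" by linarith
    then show ?thesis using 2 lc by simp
  next
    case 3
    obtain H0 where H0: "H0 \<in> A" "\<not> L \<subseteq> H0"
    proof (rule ccontr)
      assume "\<not> thesis"
      then have "L \<subseteq> \<Inter>A" using that by blast
      then show False using ess S(4) sL vec.subspace_0 unfolding essential_def by blast
    qed
    define g where "g H = H0 \<inter> H" for H
    have inj: "inj_on g P"
    proof
      fix H1 H2 assume h: "H1 \<in> P" "H2 \<in> P" "g H1 = g H2"
      show "H1 = H2"
      proof (rule ccontr)
        assume ne: "H1 \<noteq> H2"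
        have A12: "H1 \<in> A" "H2 \<in> A" "L \<subseteq> H1" "L \<subseteq> H2" using h P_def by auto
        have ne0: "H0 \<noteq> H1" using A12 H0 by auto
        have d12: "vec.dim (H1 \<inter> H2) = 2" using hyp_int_dim hyp A12 ne by auto
        have d01: "vec.dim (H0 \<inter> H1) = 2" using hyp_int_dim hyp A12 H0 ne0 by auto
        have sb: "H0 \<inter> H1 \<subseteq> H1 \<inter> H2" using h(3) unfolding g_def by blast
        have s1: "vec.subspace (H0 \<inter> H1)" "vec.subspace (H1 \<inter> H2)"
          using sub[of H0] sub[of H1] sub[of H2] A12 H0 vec.subspace_inter by auto
        have "H0 \<inter> H1 = H1 \<inter> H2"
          using vec.subspace_dim_equal[OF s1 sb] d12 d01 by simp
        then show False using A12 H0 by blast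
      qed
    qed
    have "g ` P \<subseteq> trace_lines A H0"
    proof
      fix X assume "X \<in> g ` P"
      then obtain H1 where "H1 \<in> P" "X = H0 \<inter> H1" unfolding g_def by blast
      moreover then have "H1 \<in> A" "H1 \<noteq> H0" using P_def H0 by auto
      moreover then have "vec.dim X = 2" using hyp_int_dim hyp H0 calculation by metis
      ultimately show "X \<in> trace_lines A H0" unfolding trace_lines_def lcodim_def by auto
    qed
    then have "card (g ` P) \<le> card (trace_lines A H0)"
      by (intro card_mono) (auto simp: trace_lines_def intro: finite_subset[OF _ finite_imageI[OF fin]])
    then have "card P \<le> k + 1" using card_image[OF inj] tr H0 by simp
    then show ?thesis using 3 lc k by simp
  qed
  then show ?thesis using m lc d4 by simp
qed

theorem lemma6p12:
  fixes A :: "(complex^4) set set" and k :: nat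
  assumes "k \<ge> 2"
    and "arrangement A"
    and "essential A"
    and "card A = 2 * k"
    and "\<forall>H\<in>A. card (trace_lines A H) = k + 1"
  shows "hirzebruch A"
  unfolding hirzebruch_def
proof (intro conjI ballI)
  show "arrangement A" "essential A" using assms by auto
next
  fix L assume L: "L \<in> flats A"
  have b: "4 * mult A L \<le> 2 * k * lcodim L" "lcodim L > 0" using flat_bound[OF assms L] by auto
  have "real (4 * mult A L) \<le> real (2 * k * lcodim L)" using b(1) by linarith
  then show "real (mult A L) / real (lcodim L) \<le> real (card A) / real CARD(4)"
    using b(2) assms(4) by (simp add: divide_simps)
next
  fix H assume "H \<in> A"
  then show "real (card (trace_lines A H)) = (1 - 2 / real CARD(4)) * real (card A) + 1"
    using assms(4,5) by simp
qed

end
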